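(* If $(f_m)$ is a Riesz sequence in $\mathcal{L}^2(I)$, then $(f_m*_T0)$ is also a Riesz sequence in $\mathcal{L}^2(I)$.
   Context: Let $N\ge 2$, $I=[x_0,x_N]$, $\Delta: x_0<\dots<x_N$ a partition, $L_n(x)=a_nx+b_n$ affine with $L_n(x_0)=x_{n-1}$, $L_n(x_N)=x_n$, $I_1=[x_0,x_1]$, $I_n=(x_{n-1},x_n]$ for $n\ge2$, and $\alpha=(\alpha_1,\dots,\alpha_N)\in(\mathcal{L}^\infty(I))^N$ with $\Lambda:=\operatorname{ess\,sup}\{|\alpha_n(x)|:x\in I,n=1,\dots,N\}<1$. For $f,b\in\mathcal{L}^2(I)$, $f*_Tb$ is the unique fixed point in $\mathcal{L}^2(I)$ of the contraction $Tg(x):=f(x)+\alpha_n(L_n^{-1}(x))(g-b)(L_n^{-1}(x))$, $x\in I_n$; $0$ is the null function. *)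

theory Defs
  imports "HOL-Analysis.Analysis"
begin

definition Ival :: "(nat \<Rightarrow> real) \<Rightarrow> nat \<Rightarrow> real set" where
  "Ival x N = {x 0 .. x N}"

definition Isub :: "(nat \<Rightarrow> real) \<Rightarrow> nat \<Rightarrow> real set" where
  "Isub x n = (if n = 1 then {x 0 .. x 1} else {x (n - 1) <.. x n})"

text \<open>The affine map L_n(t) = a_n t + b_n with L_n(x_0) = x_{n-1}, L_n(x_N) = x_n.\<close>
definition Lmap :: "(nat \<Rightarrow> real) \<Rightarrow> nat \<Rightarrow> nat \<Rightarrow> real \<Rightarrow> real" where
  "Lmap x N n t = x (n - 1) + (x n - x (n - 1)) / (x N - x 0) * (t - x 0)"

definition Linv :: "(nat \<Rightarrow> real) \<Rightarrow> nat \<Rightarrow> nat \<Rightarrow> real \<Rightarrow> real" where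
  "Linv x N n t = x 0 + (x N - x 0) / (x n - x (n - 1)) * (t - x (n - 1))"

definition L2 :: "real set \<Rightarrow> (real \<Rightarrow> real) \<Rightarrow> bool" where
  "L2 I g \<longleftrightarrow> g \<in> borel_measurable (lebesgue_on I) \<and>
                integrable (lebesgue_on I) (\<lambda>t. (g t)\<^sup>2)"

definition L2norm_sq :: "real set \<Rightarrow> (real \<Rightarrow> real) \<Rightarrow> real" where
  "L2norm_sq I g = (LINT t | lebesgue_on I. (g t)\<^sup>2)"

definition Top :: "(nat \<Rightarrow> real) \<Rightarrow> nat \<Rightarrow> (nat \<Rightarrow> real \<Rightarrow> real) \<Rightarrow>
    (real \<Rightarrow> real) \<Rightarrow> (real \<Rightarrow> real) \<Rightarrow> (real \<Rightarrow> real) \<Rightarrow> real \<Rightarrow> real" where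
  "Top x N \<alpha> f b g t = f t + (\<Sum>n=1..N. indicator (Isub x n) t *
      (\<alpha> n (Linv x N n t) * (g (Linv x N n t) - b (Linv x N n t))))"

text \<open>f *_T b : the (a.e.-unique) fixed point of T in L^2(I).\<close>
definition fractal :: "(nat \<Rightarrow> real) \<Rightarrow> nat \<Rightarrow> (nat \<Rightarrow> real \<Rightarrow> real) \<Rightarrow>
    (real \<Rightarrow> real) \<Rightarrow> (real \<Rightarrow> real) \<Rightarrow> real \<Rightarrow> real" where
  "fractal x N \<alpha> f b = (SOME h. L2 (Ival x N) h \<and>
      (AE t in lebesgue_on (Ival x N). Top x N \<alpha> f b h t = h t))"

definition riesz_seq :: "real set \<Rightarrow> (nat \<Rightarrow> real \<Rightarrow> real) \<Rightarrow> bool" where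
  "riesz_seq I F \<longleftrightarrow> (\<forall>m. L2 I (F m)) \<and>
     (\<exists>A B. 0 < A \<and> 0 < B \<and>
        (\<forall>S c. finite S \<longrightarrow>
           A * (\<Sum>m\<in>S. (c m)\<^sup>2) \<le> L2norm_sq I (\<lambda>t. \<Sum>m\<in>S. c m * F m t) \<and>
           L2norm_sq I (\<lambda>t. \<Sum>m\<in>S. c m * F m t) \<le> B * (\<Sum>m\<in>S. (c m)\<^sup>2)))"

end

theory Submission
  imports Defs
begin

lemma affine_meas: fixes e c :: real assumes "e \<noteq> 0"
  shows "(\<lambda>t. c + e * t) \<in> lebesgue \<rightarrow>\<^sub>M lebesgue"
  using lebesgue_affine_measurable[where c="\<lambda>_. e" and t=c] assms by simp

lemma Icc_sets_leb: "{a..b::real} \<in> sets lebesgue" by simp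
lemma Ioc_sets_leb: "{a<..b::real} \<in> sets lebesgue" by simp

lemma sq_ineq: fixes a b p q :: real assumes p: "0<p" and q: "0<q" and pq: "p+q=1" shows "(a+b)^2 \<le> a^2/p + b^2/q"
proof -
  have qe: "q = 1 - p" using pq by simp
  have "q*a^2 + p*b^2 - p*q*(a+b)^2 = (q*a - p*b)^2"
    unfolding qe by (simp add: power2_eq_square algebra_simps)
  then have "p*q*(a+b)^2 \<le> q*a^2 + p*b^2" by (smt (verit) zero_le_power2)
  then have "(a+b)^2 \<le> (q*a^2 + p*b^2) / (p*q)" using p q by (simp add: field_simps)
  also have "\<dots> = a^2/p + b^2/q" using p q by (simp add: field_simps)
  finally show ?thesis .
qed

lemma L2_add: assumes f: "L2 J f" and g: "L2 J g" shows "L2 J (\<lambda>t. f t + g t)"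
proof -
  have fm: "f \<in> borel_measurable (lebesgue_on J)" and gm: "g \<in> borel_measurable (lebesgue_on J)"
    using f g by (auto simp: L2_def)
  have i: "integrable (lebesgue_on J) (\<lambda>t. 2 * (f t)\<^sup>2 + 2 * (g t)\<^sup>2)"
    using f g by (auto simp: L2_def)
  have "integrable (lebesgue_on J) (\<lambda>t. (f t + g t)\<^sup>2)"
  proof (rule Bochner_Integration.integrable_bound[OF i])
    show "(\<lambda>t. (f t + g t)\<^sup>2) \<in> borel_measurable (lebesgue_on J)" using fm gm by measurable
    show "AE t in lebesgue_on J. norm ((f t + g t)\<^sup>2) \<le> norm (2 * (f t)\<^sup>2 + 2 * (g t)\<^sup>2)"
    proof (rule AE_I2)
      fix t
      have "(f t + g t)\<^sup>2 \<le> 2 * (f t)\<^sup>2 + 2 * (g t)\<^sup>2"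
        using zero_le_power2[of "f t - g t"] by (simp add: power2_eq_square algebra_simps)
      then show "norm ((f t + g t)\<^sup>2) \<le> norm (2 * (f t)\<^sup>2 + 2 * (g t)\<^sup>2)" by simp
    qed
  qed
  then show ?thesis using fm gm by (simp add: L2_def)
qed

lemma L2_cmult: assumes f: "L2 J f" shows "L2 J (\<lambda>t. c * f t)"
proof -
  have "integrable (lebesgue_on J) (\<lambda>t. c\<^sup>2 * (f t)\<^sup>2)" using f by (auto simp: L2_def)
  moreover have fm: "f \<in> borel_measurable (lebesgue_on J)" using f by (simp add: L2_def)
  moreover have "(\<lambda>t. c * f t) \<in> borel_measurable (lebesgue_on J)" using fm by measurable
  ultimately show ?thesis by (simp add: L2_def power_mult_distrib)
qed

lemma L2_zero: "L2 J (\<lambda>t. 0)" by (simp add: L2_def)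

lemma L2_sum: "finite S \<Longrightarrow> (\<And>m. m \<in> S \<Longrightarrow> L2 J (F m)) \<Longrightarrow> L2 J (\<lambda>t. \<Sum>m\<in>S. c m * F m t)"
proof (induction S rule: finite_induct)
  case empty then show ?case using L2_zero by simp
next
  case (insert a S)
  then show ?case using L2_add[OF L2_cmult[of J "F a" "c a"]] by simp
qed

lemma L2_nn: "L2 J g \<Longrightarrow> (\<integral>\<^sup>+t. ennreal ((g t)\<^sup>2) \<partial>lebesgue_on J) = ennreal (L2norm_sq J g)"
  unfolding L2_def L2norm_sq_def by (rule nn_integral_eq_integral) auto

lemma L2norm_nonneg: "L2norm_sq J g \<ge> 0"
  unfolding L2norm_sq_def by (rule integral_nonneg_AE) auto

lemma amgm: fixes a u v l :: real assumes "u \<ge> 0" "v \<ge> 0" "a\<^sup>2 = u * v" "l > 0"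
  shows "\<bar>a\<bar> \<le> (l * u + v / l) / 2"
proof -
  have "(l * u + v / l)\<^sup>2 - 4 * a\<^sup>2 = (l * u - v / l)\<^sup>2"
    using assms by (simp add: power2_eq_square field_simps)
  moreover have "(2 * \<bar>a\<bar>)\<^sup>2 = 4 * a\<^sup>2" by (simp add: power_mult_distrib)
  moreover have "0 \<le> (l * u - v / l)\<^sup>2" by simp
  ultimately have "(2 * \<bar>a\<bar>)\<^sup>2 \<le> (l * u + v / l)\<^sup>2" by linarith
  then have "2 * \<bar>a\<bar> \<le> l * u + v / l"
    by (rule power2_le_imp_le) (use assms in simp)
  then show ?thesis by simp
qed

lemma series_bound:
  fixes g w :: "nat \<Rightarrow> real" and L :: real
  assumes L: "0 < L" "L < 1" and w: "\<And>k. w k \<ge> 0" and sw: "summable w"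
    and eq: "\<And>k. (g k)\<^sup>2 = L^k * w k"
  shows "summable g" "(suminf g)\<^sup>2 \<le> suminf w / (1 - L)"
proof -
  have am: "\<bar>g k\<bar> \<le> (l * L^k + w k / l) / 2" if "l > 0" for l k
    by (rule amgm) (use L w eq that in auto)
  have sg: "summable (\<lambda>k. (l * L^k + w k / l) / 2)" for l
    using L sw by (intro summable_divide summable_add summable_mult summable_geometric summable_divide) auto
  have sa: "summable (\<lambda>k. \<bar>g k\<bar>)"
    by (rule summable_comparison_test[OF _ sg[of 1]]) (use am[of 1] in auto)
  then show "summable g" by (rule summable_rabs_cancel)
  have bnd: "\<bar>suminf g\<bar> \<le> (l / (1 - L) + suminf w / l) / 2" if l: "l > 0" for l
  proof -
    have "\<bar>suminf g\<bar> \<le> (\<Sum>k. \<bar>g k\<bar>)" by (rule summable_rabs[OF sa])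
    also have "\<dots> \<le> (\<Sum>k. (l * L^k + w k / l) / 2)"
      by (rule suminf_le) (use am[OF l] sa sg in auto)
    also have "\<dots> = (l / (1 - L) + suminf w / l) / 2"
    proof -
      have "(\<lambda>k. (l * L^k + w k / l) / 2) sums ((l * (1 / (1 - L)) + suminf w / l) / 2)"
        using L by (intro sums_divide sums_add sums_mult geometric_sums summable_sums sw) auto
      then show ?thesis by (simp add: sums_iff)
    qed
    finally show ?thesis .
  qed
  show "(suminf g)\<^sup>2 \<le> suminf w / (1 - L)"
  proof (cases "suminf w = 0")
    case True
    then have "\<forall>k. w k = 0" using suminf_eq_zero_iff[OF sw] w by auto
    then have "g = (\<lambda>k. 0)" using eq by auto
    then show ?thesis using True by simp
  next
    case False
    then have W: "suminf w > 0" using suminf_nonneg[OF sw] w by (simp add: less_le)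
    define q where "q = sqrt (suminf w * (1 - L))"
    have q: "q > 0" using W L by (simp add: q_def)
    have q2: "q\<^sup>2 = suminf w * (1 - L)" using W L by (simp add: q_def)
    have E: "suminf w / q = q / (1 - L)" using q q2 L by (simp add: field_simps power2_eq_square)
    have E2: "(q / (1 - L) + suminf w / q) / 2 = q / (1 - L)" unfolding E by (metis add_divide_distrib field_sum_of_halves)
    have "\<bar>suminf g\<bar> \<le> q / (1 - L)" using bnd[OF q] E2 by linarith
    then have "(suminf g)\<^sup>2 \<le> (q / (1 - L))\<^sup>2"
      by (metis abs_ge_zero order_trans power2_abs power_mono)
    also have "\<dots> = q\<^sup>2 / (1 - L)\<^sup>2" by (simp add: power_divide)
    also have "\<dots> = suminf w * (1 - L) / ((1 - L) * (1 - L))" unfolding q2 by (simp add: power2_eq_square)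
    also have "\<dots> = suminf w / (1 - L)" using L by simp
    finally show ?thesis .
  qed
qed

locale frs =
  fixes x :: "nat \<Rightarrow> real" and N :: nat and \<alpha> :: "nat \<Rightarrow> real \<Rightarrow> real" and \<Lambda> :: real
  assumes N1: "N \<ge> 1" and incr: "\<And>k. k < N \<Longrightarrow> x k < x (Suc k)"
    and ameas: "\<And>n. n \<in> {1..N} \<Longrightarrow> \<alpha> n \<in> borel_measurable (lebesgue_on (Ival x N))"
    and Lpos: "0 < \<Lambda>" and Llt: "\<Lambda> < 1"
    and abnd: "\<forall>n\<in>{1..N}. AE t in lebesgue_on (Ival x N). \<bar>\<alpha> n t\<bar> \<le> \<Lambda>"
begin

abbreviation "I \<equiv> Ival x N"

definition Mop :: "(real \<Rightarrow> real) \<Rightarrow> real \<Rightarrow> real" where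
  "Mop g t = (\<Sum>n=1..N. indicator (Isub x n) t * (\<alpha> n (Linv x N n t) * g (Linv x N n t)))"

lemma mono_x: "i < j \<Longrightarrow> j \<le> N \<Longrightarrow> x i < x j"
proof (induction j)
  case 0 then show ?case by simp
next
  case (Suc j)
  then show ?case using incr[of j] by (cases "i = j") auto
qed

lemma mono_le: "i \<le> j \<Longrightarrow> j \<le> N \<Longrightarrow> x i \<le> x j"
  using mono_x by (cases "i = j") (auto intro: less_imp_le)

lemma I_eq: "I = {x 0..x N}" by (simp add: Ival_def)

lemma I_sets[simp]: "I \<in> sets lebesgue" "I \<inter> space lebesgue \<in> sets lebesgue"
  by (simp_all add: Ival_def)

lemma Isub_sets[simp]: "Isub x n \<in> sets lebesgue"
  by (simp add: Isub_def)

lemma Isub_sub: "n \<in> {1..N} \<Longrightarrow> Isub x n \<subseteq> I"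
proof -
  assume n: "n \<in> {1..N}"
  have "x 0 \<le> x (n-1)" "x n \<le> x N" "x 0 \<le> x 1" "x 1 \<le> x N"
    using mono_le[of 0 "n-1"] mono_le[of n N] mono_le[of 0 1] mono_le[of 1 N] N1 n by auto
  then show ?thesis by (auto simp: Isub_def Ival_def)
qed

lemma partition_aux: "Suc m \<le> N \<Longrightarrow> t \<in> {x 0..x (Suc m)} \<Longrightarrow> \<exists>n\<in>{1..Suc m}. t \<in> Isub x n"
proof (induction m)
  case 0 then show ?case by (auto simp: Isub_def)
next
  case (Suc m)
  show ?case
  proof (cases "t \<le> x (Suc m)")
    case True then show ?thesis using Suc by force
  next
    case False
    then have "t \<in> Isub x (Suc (Suc m))" using Suc.prems by (auto simp: Isub_def)
    then show ?thesis by force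
  qed
qed

lemma partition: "t \<in> I \<Longrightarrow> \<exists>n\<in>{1..N}. t \<in> Isub x n"
  using partition_aux[of "N - 1" t] N1 by (auto simp: Ival_def)

lemma disj: "n \<in> {1..N} \<Longrightarrow> n' \<in> {1..N} \<Longrightarrow> t \<in> Isub x n \<Longrightarrow> t \<in> Isub x n' \<Longrightarrow> n = n'"
proof (rule ccontr)
  have A: "False" if "n < n'" "n \<in> {1..N}" "n' \<in> {1..N}" "t \<in> Isub x n" "t \<in> Isub x n'" for n n'
  proof -
    have "t \<le> x n" using that by (auto simp: Isub_def split: if_splits)
    moreover have "x n \<le> x (n' - 1)" using mono_le[of n "n'-1"] that by auto
    moreover have "x (n' - 1) < t" using that by (auto simp: Isub_def split: if_splits)
    ultimately show False by simp
  qed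
  assume "n \<noteq> n'" "n \<in> {1..N}" "n' \<in> {1..N}" "t \<in> Isub x n" "t \<in> Isub x n'"
  then show False using A[of n n'] A[of n' n] by (cases "n < n'") auto
qed

lemma dpos: "n \<in> {1..N} \<Longrightarrow> x n - x (n - 1) > 0"
  using mono_x[of "n-1" n] by auto

lemma Dpos: "x N - x 0 > 0"
  using mono_x[of 0 N] N1 by auto

lemma Linv_in: assumes n: "n \<in> {1..N}" and t: "t \<in> Isub x n" shows "Linv x N n t \<in> I"
proof -
  define d where "d = x n - x (n - 1)"
  define D where "D = x N - x 0"
  have d: "d > 0" using dpos[OF n] by (simp add: d_def)
  have D: "D > 0" using Dpos by (simp add: D_def)
  have "0 \<le> t - x (n - 1)" "t - x (n - 1) \<le> d"
    using t n by (auto simp: Isub_def d_def split: if_splits)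
  moreover have "D / d * (t - x (n - 1)) \<le> D / d * d"
    by (rule mult_left_mono) (use d D \<open>t - x (n - 1) \<le> d\<close> in auto)
  ultimately have "0 \<le> D / d * (t - x (n - 1))" "D / d * (t - x (n - 1)) \<le> D"
    using d D by auto
  then show ?thesis by (auto simp: Linv_def Ival_def D_def d_def)
qed

lemma Mop_at: assumes n: "n \<in> {1..N}" and t: "t \<in> Isub x n"
  shows "Mop g t = \<alpha> n (Linv x N n t) * g (Linv x N n t)"
proof -
  have "Mop g t = (\<Sum>k\<in>{n}. indicator (Isub x k) t * (\<alpha> k (Linv x N k t) * g (Linv x N k t)))"
    unfolding Mop_def
    by (rule sum.mono_neutral_right) (use n t disj in \<open>auto simp: indicator_def\<close>)
  then show ?thesis using t by simp
qed

lemma Mop_out: "t \<notin> I \<Longrightarrow> Mop g t = 0"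
  unfolding Mop_def using Isub_sub by (force intro!: sum.neutral simp: indicator_def)

lemma tele: "(\<Sum>n=1..M. (x n - x (n-1))) = x M - x 0"
  by (induction M) (auto simp: sum.atLeast_Suc_atMost_Suc_shift)

lemma Linv_aff: "Linv x N n t = (x 0 - (x N - x 0) / (x n - x (n-1)) * x (n-1)) + (x N - x 0) / (x n - x (n-1)) * t"
proof -
  have "\<And>a r c. a + r * (t - c) = (a - r * c) + r * t" by (simp add: algebra_simps)
  then show ?thesis unfolding Linv_def by blast
qed

lemma meas_comp:
  fixes \<phi> :: "real \<Rightarrow> 'b::topological_space"
  assumes \<phi>: "\<phi> \<in> borel_measurable lebesgue" and n: "n \<in> {1..N}"
  shows "(\<lambda>t. \<phi> (Linv x N n t)) \<in> borel_measurable lebesgue"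
proof -
  have e: "(x N - x 0) / (x n - x (n-1)) \<noteq> 0" using dpos[OF n] Dpos by auto
  show ?thesis unfolding Linv_aff
    by (rule measurable_compose[OF affine_meas[OF e] \<phi>])
qed

lemma CV:
  fixes \<phi> :: "real \<Rightarrow> ennreal"
  assumes \<phi>: "\<phi> \<in> borel_measurable lebesgue" and n: "n \<in> {1..N}"
  shows "(\<integral>\<^sup>+t. \<phi> (Linv x N n t) \<partial>lebesgue) = ennreal ((x n - x (n-1)) / (x N - x 0)) * (\<integral>\<^sup>+s. \<phi> s \<partial>lebesgue)"
proof -
  define e where "e = (x N - x 0) / (x n - x (n-1))"
  define c where "c = x 0 - (x N - x 0) / (x n - x (n-1)) * x (n-1)"
  have epos: "e > 0" using dpos[OF n] Dpos by (auto simp: e_def)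
  have "(\<integral>\<^sup>+s. \<phi> s \<partial>lebesgue) = ennreal \<bar>e\<bar> * (\<integral>\<^sup>+t. \<phi> (c + e * t) \<partial>lebesgue)"
    using nn_integral_real_affine_lebesgue[OF \<phi>, of e c] epos by simp
  then have "ennreal (1/e) * (\<integral>\<^sup>+s. \<phi> s \<partial>lebesgue) = ennreal (1/e) * ennreal e * (\<integral>\<^sup>+t. \<phi> (c + e * t) \<partial>lebesgue)"
    using epos by (simp add: mult.assoc)
  also have "ennreal (1/e) * ennreal e = 1"
    using epos by (simp flip: ennreal_mult)
  finally have "(\<integral>\<^sup>+t. \<phi> (c + e * t) \<partial>lebesgue) = ennreal (1/e) * (\<integral>\<^sup>+s. \<phi> s \<partial>lebesgue)" by simp
  moreover have "1/e = (x n - x (n-1)) / (x N - x 0)" by (simp add: e_def)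
  moreover have "\<And>t. Linv x N n t = c + e * t" by (simp add: Linv_aff c_def e_def)
  ultimately show ?thesis by simp
qed

lemma ind_meas:
  fixes g :: "real \<Rightarrow> real"
  assumes "g \<in> borel_measurable (lebesgue_on I)"
  shows "(\<lambda>s. indicator I s * g s) \<in> borel_measurable lebesgue"
  using assms borel_measurable_restrict_space_iff[of I lebesgue g] by simp

lemma Mop_eq: "Mop g t = (\<Sum>n=1..N. indicator (Isub x n) t *
   ((indicator I (Linv x N n t) * \<alpha> n (Linv x N n t)) * (indicator I (Linv x N n t) * g (Linv x N n t))))"
  unfolding Mop_def
proof (rule sum.cong)
  fix n assume n: "n \<in> {1..N}"
  show "indicator (Isub x n) t * (\<alpha> n (Linv x N n t) * g (Linv x N n t)) = indicator (Isub x n) t *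
   ((indicator I (Linv x N n t) * \<alpha> n (Linv x N n t)) * (indicator I (Linv x N n t) * g (Linv x N n t)))"
    by (cases "t \<in> Isub x n") (auto simp: Linv_in[OF n])
qed simp

lemma Mop_meas:
  assumes g: "g \<in> borel_measurable (lebesgue_on I)"
  shows "Mop g \<in> borel_measurable lebesgue"
proof -
  have "(\<lambda>t. \<Sum>n=1..N. indicator (Isub x n) t *
   ((indicator I (Linv x N n t) * \<alpha> n (Linv x N n t)) * (indicator I (Linv x N n t) * g (Linv x N n t))))
     \<in> borel_measurable lebesgue"
  proof (rule borel_measurable_sum)
    fix n assume n: "n \<in> {1..N}"
    have 1: "indicator (Isub x n) \<in> borel_measurable lebesgue" by (rule borel_measurable_indicator) simp
    have 2: "(\<lambda>t. indicator I (Linv x N n t) * \<alpha> n (Linv x N n t)) \<in> borel_measurable lebesgue"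
      using meas_comp[OF ind_meas[OF ameas[OF n]] n] .
    have 3: "(\<lambda>t. indicator I (Linv x N n t) * g (Linv x N n t)) \<in> borel_measurable lebesgue"
      using meas_comp[OF ind_meas[OF g] n] .
    show "(\<lambda>t. indicator (Isub x n) t *
   ((indicator I (Linv x N n t) * \<alpha> n (Linv x N n t)) * (indicator I (Linv x N n t) * g (Linv x N n t))))
     \<in> borel_measurable lebesgue"
      by (intro borel_measurable_times 1 2 3)
  qed
  then show ?thesis by (simp add: Mop_eq[abs_def])
qed

lemma Mop_meas': "g \<in> borel_measurable (lebesgue_on I) \<Longrightarrow> Mop g \<in> borel_measurable (lebesgue_on I)"
  using Mop_meas measurable_restrict_space1 by blast

lemma KEY:
  assumes g: "g \<in> borel_measurable (lebesgue_on I)"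
  shows "(\<integral>\<^sup>+t. ennreal ((Mop g t)\<^sup>2) \<partial>lebesgue_on I) \<le> ennreal (\<Lambda>\<^sup>2) * (\<integral>\<^sup>+t. ennreal ((g t)\<^sup>2) \<partial>lebesgue_on I)"
proof -
  define \<psi> where "\<psi> n s = ennreal ((indicator I s * \<alpha> n s * (indicator I s * g s))\<^sup>2)" for n s
  define X where "X = (\<integral>\<^sup>+t. ennreal ((g t)\<^sup>2) \<partial>lebesgue_on I)"
  have \<psi>m: "\<psi> n \<in> borel_measurable lebesgue" if n: "n \<in> {1..N}" for n
    unfolding \<psi>_def using ind_meas[OF ameas[OF n]] ind_meas[OF g] by measurable
  have "(\<integral>\<^sup>+t. ennreal ((Mop g t)\<^sup>2) \<partial>lebesgue_on I) = (\<integral>\<^sup>+t. ennreal ((Mop g t)\<^sup>2) * indicator I t \<partial>lebesgue)"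
    by (rule nn_integral_restrict_space) simp
  also have "\<dots> \<le> (\<integral>\<^sup>+t. (\<Sum>n=1..N. \<psi> n (Linv x N n t)) \<partial>lebesgue)"
  proof (rule nn_integral_mono)
    fix t
    show "ennreal ((Mop g t)\<^sup>2) * indicator I t \<le> (\<Sum>n=1..N. \<psi> n (Linv x N n t))"
    proof (cases "t \<in> I")
      case True
      then obtain n0 where n0: "n0 \<in> {1..N}" "t \<in> Isub x n0" using partition by blast
      have L: "Linv x N n0 t \<in> I" using Linv_in[OF n0] .
      have "ennreal ((Mop g t)\<^sup>2) * indicator I t = \<psi> n0 (Linv x N n0 t)"
        using True L by (simp add: Mop_at[OF n0] \<psi>_def)
      also have "\<dots> \<le> (\<Sum>n=1..N. \<psi> n (Linv x N n t))"
        by (rule member_le_sum) (use n0 in auto)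
      finally show ?thesis .
    qed simp
  qed
  also have "\<dots> = (\<Sum>n=1..N. \<integral>\<^sup>+t. \<psi> n (Linv x N n t) \<partial>lebesgue)"
    by (rule nn_integral_sum) (use meas_comp[OF \<psi>m] in auto)
  also have "\<dots> = (\<Sum>n=1..N. ennreal ((x n - x (n-1)) / (x N - x 0)) * (\<integral>\<^sup>+s. \<psi> n s \<partial>lebesgue))"
    by (rule sum.cong) (auto simp: CV[OF \<psi>m])
  also have "\<dots> \<le> (\<Sum>n=1..N. ennreal ((x n - x (n-1)) / (x N - x 0)) * (ennreal (\<Lambda>\<^sup>2) * X))"
  proof (rule sum_mono, rule mult_left_mono)
    fix n assume n: "n \<in> {1..N}"
    have AEn: "AE s in lebesgue. s \<in> I \<longrightarrow> \<bar>\<alpha> n s\<bar> \<le> \<Lambda>"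
      using abnd n AE_restrict_space_iff[of I lebesgue] by simp
    have gm: "(\<lambda>s. ennreal ((g s)\<^sup>2) * indicator I s) \<in> borel_measurable lebesgue"
    proof -
      have "(\<lambda>s. ennreal ((indicator I s * g s)\<^sup>2)) \<in> borel_measurable lebesgue"
        using ind_meas[OF g] by measurable
      moreover have "(\<lambda>s. ennreal ((indicator I s * g s)\<^sup>2)) = (\<lambda>s. ennreal ((g s)\<^sup>2) * indicator I s)"
        by (auto simp: indicator_def)
      ultimately show ?thesis by simp
    qed
    have "(\<integral>\<^sup>+s. \<psi> n s \<partial>lebesgue) \<le> (\<integral>\<^sup>+s. ennreal (\<Lambda>\<^sup>2) * (ennreal ((g s)\<^sup>2) * indicator I s) \<partial>lebesgue)"
    proof (rule nn_integral_mono_AE)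
      show "AE s in lebesgue. \<psi> n s \<le> ennreal (\<Lambda>\<^sup>2) * (ennreal ((g s)\<^sup>2) * indicator I s)"
        using AEn
      proof eventually_elim
        case (elim s)
        show ?case
        proof (cases "s \<in> I")
          case True
          then have a: "\<bar>\<alpha> n s\<bar> \<le> \<Lambda>" using elim by simp
          have "(\<alpha> n s)\<^sup>2 \<le> \<Lambda>\<^sup>2" using a power_mono[of "\<bar>\<alpha> n s\<bar>" \<Lambda> 2] by simp
          then have "(\<alpha> n s * g s)\<^sup>2 \<le> \<Lambda>\<^sup>2 * (g s)\<^sup>2"
            by (simp add: power_mult_distrib mult_right_mono)
          then show ?thesis using True
            by (simp add: \<psi>_def ennreal_mult[symmetric] ennreal_leI)
        qed (simp add: \<psi>_def)
      qed
    qed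
    also have "\<dots> = ennreal (\<Lambda>\<^sup>2) * X"
      unfolding X_def
      by (subst nn_integral_cmult) (auto simp: nn_integral_restrict_space[of I lebesgue] gm)
    finally show "(\<integral>\<^sup>+s. \<psi> n s \<partial>lebesgue) \<le> ennreal (\<Lambda>\<^sup>2) * X" .
  qed simp
  also have "\<dots> = ennreal (\<Sum>n=1..N. (x n - x (n-1)) / (x N - x 0)) * (ennreal (\<Lambda>\<^sup>2) * X)"
    by (subst sum_distrib_right[symmetric], subst sum_ennreal) (use dpos Dpos in \<open>auto intro!: divide_nonneg_pos less_imp_le\<close>)
  also have "(\<Sum>n=1..N. (x n - x (n-1)) / (x N - x 0)) = 1"
    using tele[of N] Dpos by (simp add: sum_divide_distrib[symmetric])
  finally show ?thesis by (simp add: X_def)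
qed

lemma L2_Mop: assumes g: "L2 I g"
  shows "L2 I (Mop g)" "L2norm_sq I (Mop g) \<le> \<Lambda>\<^sup>2 * L2norm_sq I g"
proof -
  have gm: "g \<in> borel_measurable (lebesgue_on I)" using g by (simp add: L2_def)
  have Mm: "Mop g \<in> borel_measurable (lebesgue_on I)" using Mop_meas'[OF gm] .
  have K: "(\<integral>\<^sup>+t. ennreal ((Mop g t)\<^sup>2) \<partial>lebesgue_on I) \<le> ennreal (\<Lambda>\<^sup>2 * L2norm_sq I g)"
    using KEY[OF gm] L2_nn[OF g] by (simp add: ennreal_mult L2norm_nonneg)
  have "integrable (lebesgue_on I) (\<lambda>t. (Mop g t)\<^sup>2)"
  proof (rule integrableI_bounded)
    show "(\<lambda>t. (Mop g t)\<^sup>2) \<in> borel_measurable (lebesgue_on I)" using Mm by measurable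
    show "(\<integral>\<^sup>+t. ennreal (norm ((Mop g t)\<^sup>2)) \<partial>lebesgue_on I) < \<infinity>"
      using K by (simp add: le_less_trans)
  qed
  then show L: "L2 I (Mop g)" using Mm by (simp add: L2_def)
  show "L2norm_sq I (Mop g) \<le> \<Lambda>\<^sup>2 * L2norm_sq I g"
    using K L2_nn[OF L] L2norm_nonneg[of I g]
    by (simp add: ennreal_le_iff)
qed

lemma EST:
  assumes H: "L2 I H" and P: "L2 I P" and fp: "AE t in lebesgue_on I. H t = P t + Mop H t"
  shows "L2norm_sq I H \<le> L2norm_sq I P / (1 - \<Lambda>)\<^sup>2" "L2norm_sq I P \<le> 4 * L2norm_sq I H"
proof -
  have MH: "L2 I (Mop H)" and MHn: "L2norm_sq I (Mop H) \<le> \<Lambda>\<^sup>2 * L2norm_sq I H" using L2_Mop[OF H] by auto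
  have iH: "integrable (lebesgue_on I) (\<lambda>t. (H t)\<^sup>2)" using H by (simp add: L2_def)
  have iP: "integrable (lebesgue_on I) (\<lambda>t. (P t)\<^sup>2)" using P by (simp add: L2_def)
  have iM: "integrable (lebesgue_on I) (\<lambda>t. (Mop H t)\<^sup>2)" using MH by (simp add: L2_def)
  have "L2norm_sq I H \<le> (\<integral>t. (P t)\<^sup>2 / (1 - \<Lambda>) + (Mop H t)\<^sup>2 / \<Lambda> \<partial>lebesgue_on I)"
    unfolding L2norm_sq_def
  proof (rule integral_mono_AE[OF iH])
    show "integrable (lebesgue_on I) (\<lambda>t. (P t)\<^sup>2 / (1 - \<Lambda>) + (Mop H t)\<^sup>2 / \<Lambda>)"
      using iP iM by auto
    show "AE t in lebesgue_on I. (H t)\<^sup>2 \<le> (P t)\<^sup>2 / (1 - \<Lambda>) + (Mop H t)\<^sup>2 / \<Lambda>"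
      using fp
    proof eventually_elim
      case (elim t)
      show ?case unfolding elim by (rule sq_ineq) (use Lpos Llt in auto)
    qed
  qed
  also have "\<dots> = L2norm_sq I P / (1 - \<Lambda>) + L2norm_sq I (Mop H) / \<Lambda>"
    unfolding L2norm_sq_def using iP iM by simp
  also have "\<dots> \<le> L2norm_sq I P / (1 - \<Lambda>) + \<Lambda> * L2norm_sq I H"
  proof -
    have "L2norm_sq I (Mop H) / \<Lambda> \<le> \<Lambda>\<^sup>2 * L2norm_sq I H / \<Lambda>"
      using MHn Lpos by (simp add: divide_right_mono)
    also have "\<dots> = \<Lambda> * L2norm_sq I H" using Lpos by (simp add: power2_eq_square)
    finally show ?thesis by simp
  qed
  finally have "(1 - \<Lambda>) * L2norm_sq I H \<le> L2norm_sq I P / (1 - \<Lambda>)" by (simp add: algebra_simps)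
  then have "L2norm_sq I H * (1 - \<Lambda>) \<le> (L2norm_sq I P / (1 - \<Lambda>))"
    by (simp add: mult.commute)
  then have "L2norm_sq I H \<le> (L2norm_sq I P / (1 - \<Lambda>)) / (1 - \<Lambda>)"
    using Llt by (subst pos_le_divide_eq) auto
  then show "L2norm_sq I H \<le> L2norm_sq I P / (1 - \<Lambda>)\<^sup>2"
    by (simp add: power2_eq_square mult_ac)
  have "L2norm_sq I P \<le> (\<integral>t. 2 * (H t)\<^sup>2 + 2 * (Mop H t)\<^sup>2 \<partial>lebesgue_on I)"
    unfolding L2norm_sq_def
  proof (rule integral_mono_AE[OF iP])
    show "integrable (lebesgue_on I) (\<lambda>t. 2 * (H t)\<^sup>2 + 2 * (Mop H t)\<^sup>2)"
      using iH iM by auto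
    show "AE t in lebesgue_on I. (P t)\<^sup>2 \<le> 2 * (H t)\<^sup>2 + 2 * (Mop H t)\<^sup>2"
      using fp
    proof eventually_elim
      case (elim t)
      then have e: "P t = H t - Mop H t" by simp
      have "(H t - Mop H t)\<^sup>2 \<le> 2 * (H t)\<^sup>2 + 2 * (Mop H t)\<^sup>2"
        using zero_le_power2[of "H t + Mop H t"] by (simp add: power2_eq_square algebra_simps)
      then show ?case by (simp only: e)
    qed
  qed
  also have "\<dots> = 2 * L2norm_sq I H + 2 * L2norm_sq I (Mop H)"
    unfolding L2norm_sq_def using iH iM by simp
  also have "\<dots> \<le> 2 * L2norm_sq I H + 2 * (\<Lambda>\<^sup>2 * L2norm_sq I H)" using MHn by simp
  also have "\<dots> \<le> 4 * L2norm_sq I H"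
  proof -
    have "\<Lambda>\<^sup>2 \<le> 1" using Lpos Llt by (simp add: power_le_one)
    then have "\<Lambda>\<^sup>2 * L2norm_sq I H \<le> 1 * L2norm_sq I H"
      using L2norm_nonneg[of I H] by (intro mult_right_mono) auto
    then show ?thesis by simp
  qed
  finally show "L2norm_sq I P \<le> 4 * L2norm_sq I H" .
qed

lemma Top_eq: "Top x N \<alpha> f (\<lambda>_. 0) g t = f t + Mop g t"
  unfolding Top_def Mop_def by simp

definition gk :: "(real \<Rightarrow> real) \<Rightarrow> nat \<Rightarrow> real \<Rightarrow> real" where
  "gk f k = (Mop ^^ k) f"

lemma gk_0[simp]: "gk f 0 = f" and gk_Suc: "gk f (Suc k) = Mop (gk f k)"
  by (simp_all add: gk_def)

lemma gk_meas: "f \<in> borel_measurable (lebesgue_on I) \<Longrightarrow> gk f k \<in> borel_measurable (lebesgue_on I)"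
  by (induction k) (simp_all add: gk_Suc Mop_meas')

lemma gk_nn:
  assumes fm: "f \<in> borel_measurable (lebesgue_on I)"
  shows "(\<integral>\<^sup>+t. ennreal ((gk f k t)\<^sup>2) \<partial>lebesgue_on I) \<le> ennreal (\<Lambda>^(2*k)) * (\<integral>\<^sup>+t. ennreal ((f t)\<^sup>2) \<partial>lebesgue_on I)"
proof (induction k)
  case 0 then show ?case by simp
next
  case (Suc k)
  have "(\<integral>\<^sup>+t. ennreal ((gk f (Suc k) t)\<^sup>2) \<partial>lebesgue_on I) \<le> ennreal (\<Lambda>\<^sup>2) * (\<integral>\<^sup>+t. ennreal ((gk f k t)\<^sup>2) \<partial>lebesgue_on I)"
    unfolding gk_Suc by (rule KEY[OF gk_meas[OF fm]])
  also have "\<dots> \<le> ennreal (\<Lambda>\<^sup>2) * (ennreal (\<Lambda>^(2*k)) * (\<integral>\<^sup>+t. ennreal ((f t)\<^sup>2) \<partial>lebesgue_on I))"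
    by (rule mult_left_mono[OF Suc.IH]) simp
  also have "\<dots> = ennreal (\<Lambda>^(2*Suc k)) * (\<integral>\<^sup>+t. ennreal ((f t)\<^sup>2) \<partial>lebesgue_on I)"
    using Lpos by (simp add: mult.assoc[symmetric] ennreal_mult[symmetric] power_add power2_eq_square)
  finally show ?case .
qed

lemma EX:
  assumes f: "L2 I f"
  shows "\<exists>h. L2 I h \<and> (AE t in lebesgue_on I. Top x N \<alpha> f (\<lambda>_. 0) h t = h t)"
proof -
  have fm: "f \<in> borel_measurable (lebesgue_on I)" using f by (simp add: L2_def)
  define g where "g = gk f"
  define w where "w k t = (g k t)\<^sup>2 / \<Lambda>^k" for k t
  define Wn where "Wn t = (\<Sum>k. ennreal (w k t))" for t
  define X where "X = (\<integral>\<^sup>+t. ennreal ((f t)\<^sup>2) \<partial>lebesgue_on I)"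
  have X: "X = ennreal (L2norm_sq I f)" using L2_nn[OF f] by (simp add: X_def)
  have gm: "\<And>k. g k \<in> borel_measurable (lebesgue_on I)" using gk_meas[OF fm] by (simp add: g_def)
  have w0: "\<And>k t. w k t \<ge> 0" using Lpos by (simp add: w_def)
  have wm: "\<And>k. (\<lambda>t. ennreal (w k t)) \<in> borel_measurable (lebesgue_on I)"
    unfolding w_def using gm by measurable
  have Wm: "Wn \<in> borel_measurable (lebesgue_on I)"
    unfolding Wn_def by (rule borel_measurable_suminf_order) (rule wm)
  have wint: "(\<integral>\<^sup>+t. ennreal (w k t) \<partial>lebesgue_on I) \<le> ennreal (\<Lambda>^k) * X" for k
  proof -
    have "(\<integral>\<^sup>+t. ennreal (w k t) \<partial>lebesgue_on I) = (\<integral>\<^sup>+t. ennreal (1/\<Lambda>^k) * ennreal ((g k t)\<^sup>2) \<partial>lebesgue_on I)"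
      using Lpos by (intro nn_integral_cong) (simp add: w_def ennreal_mult[symmetric])
    also have "\<dots> = ennreal (1/\<Lambda>^k) * (\<integral>\<^sup>+t. ennreal ((g k t)\<^sup>2) \<partial>lebesgue_on I)"
      by (rule nn_integral_cmult) (use gm in measurable)
    also have "\<dots> \<le> ennreal (1/\<Lambda>^k) * (ennreal (\<Lambda>^(2*k)) * X)"
      by (rule mult_left_mono) (use gk_nn[OF fm, of k] in \<open>simp_all add: g_def X_def\<close>)
    also have "\<dots> = ennreal (\<Lambda>^k) * X"
    proof -
      have "1/\<Lambda>^k * \<Lambda>^(2*k) = \<Lambda>^k" using Lpos by (simp add: power_mult power2_eq_square power_mult_distrib)
      then show ?thesis using Lpos by (simp add: mult.assoc[symmetric] ennreal_mult[symmetric])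
    qed
    finally show ?thesis .
  qed
  have geo: "(\<Sum>k. ennreal (\<Lambda>^k)) = ennreal (1/(1-\<Lambda>))"
    using Lpos Llt by (simp add: suminf_ennreal2 suminf_geometric)
  have Wint: "(\<integral>\<^sup>+t. Wn t \<partial>lebesgue_on I) \<le> ennreal (1/(1-\<Lambda>)) * X"
  proof -
    have "(\<integral>\<^sup>+t. Wn t \<partial>lebesgue_on I) = (\<Sum>k. \<integral>\<^sup>+t. ennreal (w k t) \<partial>lebesgue_on I)"
      unfolding Wn_def by (rule nn_integral_suminf) (rule wm)
    also have "\<dots> \<le> (\<Sum>k. ennreal (\<Lambda>^k) * X)"
      by (rule suminf_le) (use wint in auto)
    also have "\<dots> = ennreal (1/(1-\<Lambda>)) * X" by (simp add: geo)
    finally show ?thesis .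
  qed
  have CX: "ennreal (1/(1-\<Lambda>)) * X \<noteq> \<infinity>"
    using Llt by (simp add: X ennreal_mult[symmetric] L2norm_nonneg)
  have Wfin: "(\<integral>\<^sup>+t. Wn t \<partial>lebesgue_on I) \<noteq> \<infinity>"
    using Wint CX by (metis infinity_ennreal_def top.extremum_uniqueI)
  have AE1: "AE t in lebesgue_on I. Wn t \<noteq> \<infinity>"
    by (rule nn_integral_PInf_AE[OF Wm Wfin])
  have AE1': "AE t in lebesgue. t \<in> I \<longrightarrow> Wn t \<noteq> \<infinity>"
    using AE1 AE_restrict_space_iff[of I lebesgue] by simp
  define W' where "W' s = Wn s * indicator I s" for s
  have W'm: "W' \<in> borel_measurable lebesgue"
    using Wm borel_measurable_restrict_space_iff_ennreal[of I lebesgue Wn] by (simp add: W'_def[abs_def])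
  have W'int: "(\<integral>\<^sup>+s. W' s \<partial>lebesgue) \<noteq> \<infinity>"
    using Wfin nn_integral_restrict_space[of I lebesgue Wn] by (simp add: W'_def)
  have AE2: "AE t in lebesgue. W' (Linv x N n t) \<noteq> \<infinity>" if n: "n \<in> {1..N}" for n
  proof (rule nn_integral_PInf_AE[OF meas_comp[OF W'm n]])
    show "(\<integral>\<^sup>+t. W' (Linv x N n t) \<partial>lebesgue) \<noteq> \<infinity>"
      using W'int by (simp add: CV[OF W'm n] ennreal_mult_eq_top_iff)
  qed
  have AE2': "AE t in lebesgue. \<forall>n\<in>{1..N}. W' (Linv x N n t) \<noteq> \<infinity>"
    by (rule AE_finite_allI) (use AE2 in auto)
  define h where "h t = (\<Sum>k. g k t)" for t
  have hm: "h \<in> borel_measurable (lebesgue_on I)"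
    unfolding h_def by (rule borel_measurable_suminf) (rule gm)
  have pw: "summable (\<lambda>k. g k s) \<and> ennreal ((h s)\<^sup>2) \<le> ennreal (1/(1-\<Lambda>)) * Wn s" if Ws: "Wn s \<noteq> \<infinity>" for s
  proof -
    have sw: "summable (\<lambda>k. w k s)"
      by (rule summable_suminf_not_top) (use w0 Ws in \<open>auto simp: Wn_def\<close>)
    have eq: "(g k s)\<^sup>2 = \<Lambda>^k * w k s" for k using Lpos by (simp add: w_def)
    note sb = series_bound[of \<Lambda> "\<lambda>k. w k s" "\<lambda>k. g k s", OF Lpos Llt w0 sw eq]
    have "ennreal ((h s)\<^sup>2) \<le> ennreal (1/(1-\<Lambda>) * (\<Sum>k. w k s))"
      using sb(2) by (intro ennreal_leI) (simp add: h_def)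
    also have "\<dots> = ennreal (1/(1-\<Lambda>)) * Wn s"
    proof -
      have "ennreal (1/(1-\<Lambda>) * (\<Sum>k. w k s)) = ennreal (1/(1-\<Lambda>)) * ennreal (\<Sum>k. w k s)"
        by (rule ennreal_mult) (use Llt suminf_nonneg[OF sw] w0 in auto)
      then show ?thesis using w0 by (simp add: Wn_def suminf_ennreal2[OF _ sw])
    qed
    finally show ?thesis using sb(1) by simp
  qed
  have L2h: "L2 I h"
  proof -
    have "integrable (lebesgue_on I) (\<lambda>t. (h t)\<^sup>2)"
    proof (rule integrableI_bounded)
      show "(\<lambda>t. (h t)\<^sup>2) \<in> borel_measurable (lebesgue_on I)" using hm by measurable
      have "(\<integral>\<^sup>+t. ennreal (norm ((h t)\<^sup>2)) \<partial>lebesgue_on I) \<le> (\<integral>\<^sup>+t. ennreal (1/(1-\<Lambda>)) * Wn t \<partial>lebesgue_on I)"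
        by (rule nn_integral_mono_AE) (use AE1 in \<open>eventually_elim, use pw in auto\<close>)
      also have "\<dots> = ennreal (1/(1-\<Lambda>)) * (\<integral>\<^sup>+t. Wn t \<partial>lebesgue_on I)"
        by (rule nn_integral_cmult[OF Wm])
      also have "\<dots> < \<infinity>"
        using Wfin Llt by (simp add: ennreal_mult_less_top less_top)
      finally show "(\<integral>\<^sup>+t. ennreal (norm ((h t)\<^sup>2)) \<partial>lebesgue_on I) < \<infinity>" .
    qed
    then show ?thesis using hm by (simp add: L2_def)
  qed
  have "AE t in lebesgue. t \<in> I \<longrightarrow> Top x N \<alpha> f (\<lambda>_. 0) h t = h t"
    using AE2'
  proof eventually_elim
    case (elim t)
    show ?case
    proof
      assume t: "t \<in> I"
      then obtain n0 where n0: "n0 \<in> {1..N}" "t \<in> Isub x n0" using partition by blast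
      define s where "s = Linv x N n0 t"
      have sI: "s \<in> I" using Linv_in[OF n0] by (simp add: s_def)
      have "W' s \<noteq> \<infinity>" using elim n0 by (auto simp: s_def)
      then have "Wn s \<noteq> \<infinity>" using sI by (simp add: W'_def)
      then have ss: "summable (\<lambda>k. g k s)" using pw by blast
      have gS: "g (Suc k) t = \<alpha> n0 s * g k s" for k
        by (simp add: g_def gk_Suc Mop_at[OF n0] s_def)
      have ssuc: "summable (\<lambda>k. g (Suc k) t)" unfolding gS by (rule summable_mult[OF ss])
      have st: "summable (\<lambda>k. g k t)" using ssuc summable_Suc_iff by blast
      have "Mop h t = \<alpha> n0 s * h s" by (simp add: Mop_at[OF n0] s_def)
      also have "\<dots> = (\<Sum>k. \<alpha> n0 s * g k s)" unfolding h_def by (rule suminf_mult[OF ss, symmetric])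
      also have "\<dots> = (\<Sum>k. g (Suc k) t)" by (simp add: gS)
      also have "\<dots> = h t - g 0 t" unfolding h_def by (rule suminf_split_head[OF st])
      finally show "Top x N \<alpha> f (\<lambda>_. 0) h t = h t" by (simp add: Top_eq g_def)
    qed
  qed
  then have "AE t in lebesgue_on I. Top x N \<alpha> f (\<lambda>_. 0) h t = h t"
    using AE_restrict_space_iff[of I lebesgue] by simp
  then show ?thesis using L2h by blast
qed

lemma Mop_sum: "Mop (\<lambda>t. \<Sum>m\<in>S. c m * G m t) t = (\<Sum>m\<in>S. c m * Mop (G m) t)"
proof -
  have "Mop (\<lambda>t. \<Sum>m\<in>S. c m * G m t) t = (\<Sum>n=1..N. \<Sum>m\<in>S. c m * (indicator (Isub x n) t * (\<alpha> n (Linv x N n t) * G m (Linv x N n t))))"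
    unfolding Mop_def by (rule sum.cong) (simp_all add: sum_distrib_left mult_ac)
  also have "\<dots> = (\<Sum>m\<in>S. \<Sum>n=1..N. c m * (indicator (Isub x n) t * (\<alpha> n (Linv x N n t) * G m (Linv x N n t))))"
    by (rule sum.swap)
  also have "\<dots> = (\<Sum>m\<in>S. c m * Mop (G m) t)"
    by (simp only: Mop_def sum_distrib_left)
  finally show ?thesis .
qed

end

theorem theorem6p14:
  fixes x :: "nat \<Rightarrow> real" and N :: nat and \<alpha> :: "nat \<Rightarrow> real \<Rightarrow> real"
    and F :: "nat \<Rightarrow> real \<Rightarrow> real"
  assumes "N \<ge> 2"
    and "\<And>k. k < N \<Longrightarrow> x k < x (Suc k)"
    and "\<And>n. n \<in> {1..N} \<Longrightarrow> \<alpha> n \<in> borel_measurable (lebesgue_on (Ival x N))"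
    and "\<exists>\<Lambda><1. \<forall>n\<in>{1..N}. AE t in lebesgue_on (Ival x N). \<bar>\<alpha> n t\<bar> \<le> \<Lambda>"
    and "riesz_seq (Ival x N) F"
  shows "riesz_seq (Ival x N) (\<lambda>m. fractal x N \<alpha> (F m) (\<lambda>_. 0))"
proof -
  obtain \<Lambda>0 where L0: "\<Lambda>0 < 1" and b0: "\<forall>n\<in>{1..N}. AE t in lebesgue_on (Ival x N). \<bar>\<alpha> n t\<bar> \<le> \<Lambda>0"
    using assms(4) by blast
  define \<Lambda> where "\<Lambda> = max \<Lambda>0 (1/2)"
  have Lp: "0 < \<Lambda>" "\<Lambda> < 1" using L0 by (auto simp: \<Lambda>_def)
  have b: "\<forall>n\<in>{1..N}. AE t in lebesgue_on (Ival x N). \<bar>\<alpha> n t\<bar> \<le> \<Lambda>"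
  proof
    fix n assume "n \<in> {1..N}"
    then have "AE t in lebesgue_on (Ival x N). \<bar>\<alpha> n t\<bar> \<le> \<Lambda>0" using b0 by blast
    then show "AE t in lebesgue_on (Ival x N). \<bar>\<alpha> n t\<bar> \<le> \<Lambda>"
      by (rule eventually_mono) (auto simp: \<Lambda>_def)
  qed
  interpret frs x N \<alpha> \<Lambda>
    by unfold_locales (use assms(1,2,3) Lp b in auto)
  obtain A B where FL2: "\<And>m. L2 I (F m)" and AB: "0 < A" "0 < B"
    and R: "\<And>S c. finite S \<Longrightarrow>
           A * (\<Sum>m\<in>S. (c m)\<^sup>2) \<le> L2norm_sq I (\<lambda>t. \<Sum>m\<in>S. c m * F m t) \<and>
           L2norm_sq I (\<lambda>t. \<Sum>m\<in>S. c m * F m t) \<le> B * (\<Sum>m\<in>S. (c m)\<^sup>2)"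
    using assms(5) unfolding riesz_seq_def by blast
  define hf where "hf m = fractal x N \<alpha> (F m) (\<lambda>_. 0)" for m
  have hs: "L2 I (hf m) \<and> (AE t in lebesgue_on I. Top x N \<alpha> (F m) (\<lambda>_. 0) (hf m) t = hf m t)" for m
    unfolding hf_def fractal_def by (rule someI_ex[OF EX[OF FL2]])
  have main: "A / 4 * (\<Sum>m\<in>S. (c m)\<^sup>2) \<le> L2norm_sq I (\<lambda>t. \<Sum>m\<in>S. c m * hf m t) \<and>
      L2norm_sq I (\<lambda>t. \<Sum>m\<in>S. c m * hf m t) \<le> B / (1 - \<Lambda>)\<^sup>2 * (\<Sum>m\<in>S. (c m)\<^sup>2)"
    if S: "finite S" for S c
  proof -
    define H where "H t = (\<Sum>m\<in>S. c m * hf m t)" for t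
    define P where "P t = (\<Sum>m\<in>S. c m * F m t)" for t
    have LH: "L2 I H" unfolding H_def by (rule L2_sum[OF S]) (use hs in blast)
    have LP: "L2 I P" unfolding P_def by (rule L2_sum[OF S]) (use FL2 in blast)
    have "AE t in lebesgue_on I. \<forall>m\<in>S. Top x N \<alpha> (F m) (\<lambda>_. 0) (hf m) t = hf m t"
      by (rule AE_finite_allI[OF S]) (use hs in blast)
    then have fp: "AE t in lebesgue_on I. H t = P t + Mop H t"
    proof eventually_elim
      case (elim t)
      then have e: "\<And>m. m \<in> S \<Longrightarrow> hf m t = F m t + Mop (hf m) t" by (simp add: Top_eq)
      have "H t = (\<Sum>m\<in>S. c m * (F m t + Mop (hf m) t))"
        unfolding H_def by (rule sum.cong) (simp_all add: e)
      also have "\<dots> = P t + (\<Sum>m\<in>S. c m * Mop (hf m) t)"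
        by (simp add: P_def distrib_left sum.distrib)
      also have "(\<Sum>m\<in>S. c m * Mop (hf m) t) = Mop H t"
        unfolding H_def by (rule Mop_sum[symmetric])
      finally show ?case .
    qed
    note E = EST[OF LH LP fp]
    have R0: "A * (\<Sum>m\<in>S. (c m)\<^sup>2) \<le> L2norm_sq I P \<and> L2norm_sq I P \<le> B * (\<Sum>m\<in>S. (c m)\<^sup>2)"
      using R[OF S, of c] unfolding P_def[abs_def] .
    then have R1: "A * (\<Sum>m\<in>S. (c m)\<^sup>2) \<le> L2norm_sq I P" "L2norm_sq I P \<le> B * (\<Sum>m\<in>S. (c m)\<^sup>2)"
      by auto
    have "A / 4 * (\<Sum>m\<in>S. (c m)\<^sup>2) \<le> L2norm_sq I H" using R1(1) E(2) by simp
    moreover have "L2norm_sq I H \<le> B / (1 - \<Lambda>)\<^sup>2 * (\<Sum>m\<in>S. (c m)\<^sup>2)"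
    proof -
      have "L2norm_sq I P / (1 - \<Lambda>)\<^sup>2 \<le> B * (\<Sum>m\<in>S. (c m)\<^sup>2) / (1 - \<Lambda>)\<^sup>2"
        by (rule divide_right_mono[OF R1(2)]) simp
      then show ?thesis using E(1) by simp
    qed
    ultimately show ?thesis by (simp add: H_def[abs_def])
  qed
  have c1: "\<forall>m. L2 (Ival x N) (fractal x N \<alpha> (F m) (\<lambda>_. 0))" using hs by (simp add: hf_def)
  have c2: "0 < A / 4 \<and> 0 < B / (1 - \<Lambda>)\<^sup>2 \<and> (\<forall>S c. finite S \<longrightarrow>
      A / 4 * (\<Sum>m\<in>S. (c m)\<^sup>2) \<le> L2norm_sq (Ival x N) (\<lambda>t. \<Sum>m\<in>S. c m * fractal x N \<alpha> (F m) (\<lambda>_. 0) t) \<and>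
      L2norm_sq (Ival x N) (\<lambda>t. \<Sum>m\<in>S. c m * fractal x N \<alpha> (F m) (\<lambda>_. 0) t) \<le> B / (1 - \<Lambda>)\<^sup>2 * (\<Sum>m\<in>S. (c m)\<^sup>2))"
    using AB Lp main[unfolded hf_def] by simp
  show ?thesis unfolding riesz_seq_def using c1 c2 by blast
qed

end
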